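(* Let $G$ be a finite group and $C$ a conjugacy class of $G$, $C\ne\{1\}$, whose elements generate $G$. Then the power series $\chi_{(G,C)}(t)=\sum_{k\ge0}h_kt^k$ is a rational function of $t$, where $h_k$ is the number of elements $s\in S(G,C)^G_{\mathbf 1}$ of length $k$.
   Context: The factorization semigroup $S(G,C)$ is generated by symbols $x_g$, $g\in C$, subject to $x_{g_1}x_{g_2}=x_{g_2}x_{g_2^{-1}g_1g_2}=x_{g_1g_2g_1^{-1}}x_{g_1}$ ($g_1,g_2\in C$); $\alpha_G:S(G,C)\to G$, $x_g\mapsto g$. The length of $s$ is the number of factors in any expression of $s$ as a product of the $x_g$. For $s=x_{g_1}\cdots x_{g_n}$, $G_s$ is the subgroup generated by $g_1,\dots,g_n$ (well defined). $S(G,C)^G_{\mathbf 1}=\{s: G_s=G,\ \alpha_G(s)=1\}$. *)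

theory Defs
  imports "HOL-Algebra.Algebra" "HOL-Computational_Algebra.Polynomial_FPS"
begin

definition word_prod :: "('a, 'b) monoid_scheme \<Rightarrow> 'a list \<Rightarrow> 'a" where
  "word_prod G w = foldr (\<lambda>x y. x \<otimes>\<^bsub>G\<^esub> y) w \<one>\<^bsub>G\<^esub>"

definition fact_step :: "('a, 'b) monoid_scheme \<Rightarrow> 'a set \<Rightarrow> ('a list \<times> 'a list) set" where
  "fact_step G C =
     {(u @ [g1, g2] @ v, u @ [g2, inv\<^bsub>G\<^esub> g2 \<otimes>\<^bsub>G\<^esub> g1 \<otimes>\<^bsub>G\<^esub> g2] @ v) | u v g1 g2. g1 \<in> C \<and> g2 \<in> C}
   \<union> {(u @ [g1, g2] @ v, u @ [g1 \<otimes>\<^bsub>G\<^esub> g2 \<otimes>\<^bsub>G\<^esub> inv\<^bsub>G\<^esub> g1, g1] @ v) | u v g1 g2. g1 \<in> C \<and> g2 \<in> C}"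

text \<open>The congruence defining S(G,C): words in C are identified iff they are connected
  by a finite chain of applications of the relations (in either direction).\<close>
definition fact_equiv :: "('a, 'b) monoid_scheme \<Rightarrow> 'a set \<Rightarrow> ('a list \<times> 'a list) set" where
  "fact_equiv G C = (fact_step G C \<union> (fact_step G C)\<inverse>)\<^sup>*"

text \<open>Words of length k representing elements s of S(G,C) with G_s = G and alpha(s) = 1.\<close>
definition words_G_one :: "('a, 'b) monoid_scheme \<Rightarrow> 'a set \<Rightarrow> nat \<Rightarrow> 'a list set" where
  "words_G_one G C k = {w. length w = k \<and> set w \<subseteq> C \<and> word_prod G w = \<one>\<^bsub>G\<^esub>
                           \<and> generate G (set w) = carrier G}"

definition h_count :: "('a, 'b) monoid_scheme \<Rightarrow> 'a set \<Rightarrow> nat \<Rightarrow> nat" where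
  "h_count G C k = card (words_G_one G C k // fact_equiv G C)"

definition conj_class :: "('a, 'b) monoid_scheme \<Rightarrow> 'a \<Rightarrow> 'a set" where
  "conj_class G c = {g \<otimes>\<^bsub>G\<^esub> c \<otimes>\<^bsub>G\<^esub> inv\<^bsub>G\<^esub> g | g. g \<in> carrier G}"

definition rational_fps :: "'k::field fps \<Rightarrow> bool" where
  "rational_fps F \<longleftrightarrow> (\<exists>p q :: 'k poly. q \<noteq> 0 \<and> fps_of_poly q * F = fps_of_poly p)"

end

theory Submission
  imports Defs "HOL-Algebra.Multiplicative_Group"
begin

lemma (in group) conj_comp:
  "x\<in>carrier G \<Longrightarrow> y\<in>carrier G \<Longrightarrow> c\<in>carrier G \<Longrightarrow>
   x \<otimes> (y \<otimes> c \<otimes> inv y) \<otimes> inv x = (x \<otimes> y) \<otimes> c \<otimes> inv (x \<otimes> y)"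
  by (simp add: m_assoc inv_mult_group)

lemma (in group) conj_back:
  "x\<in>carrier G \<Longrightarrow> c\<in>carrier G \<Longrightarrow> inv x \<otimes> (x \<otimes> c \<otimes> inv x) \<otimes> x = c"
  by (simp add: m_assoc) (simp add: m_assoc[symmetric])

lemma (in group) conj_back2:
  "x\<in>carrier G \<Longrightarrow> c\<in>carrier G \<Longrightarrow> x \<otimes> (inv x \<otimes> c \<otimes> x) \<otimes> inv x = c"
  by (simp add: m_assoc) (simp add: m_assoc[symmetric])

lemma (in group) word_prod_closed: "set w \<subseteq> carrier G \<Longrightarrow> word_prod G w \<in> carrier G"
  by (induction w) (auto simp: word_prod_def)

lemma word_prod_Nil[simp]: "word_prod G [] = \<one>\<^bsub>G\<^esub>"
  by (simp add: word_prod_def)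
lemma word_prod_Cons[simp]: "word_prod G (x # w) = x \<otimes>\<^bsub>G\<^esub> word_prod G w"
  by (simp add: word_prod_def)

lemma (in group) word_prod_append:
  "set u \<subseteq> carrier G \<Longrightarrow> set v \<subseteq> carrier G \<Longrightarrow> word_prod G (u @ v) = word_prod G u \<otimes> word_prod G v"
  by (induction u) (auto simp: word_prod_closed m_assoc)

lemma (in group) word_prod_replicate:
  "x \<in> carrier G \<Longrightarrow> word_prod G (replicate n x) = x [^] n"
  by (induction n) (auto simp: nat_pow_Suc2[symmetric])

locale fsetup = group +
  fixes C :: "'a set"
  assumes C_sub: "C \<subseteq> carrier G"
  and C_conj: "\<And>g c. g \<in> carrier G \<Longrightarrow> c \<in> C \<Longrightarrow> g \<otimes> c \<otimes> inv g \<in> C"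
  and fin: "finite (carrier G)"
begin

abbreviation "R \<equiv> fact_equiv G C"

lemma C_in[simp]: "c \<in> C \<Longrightarrow> c \<in> carrier G" using C_sub by auto

lemma C_conj': "g \<in> C \<Longrightarrow> c \<in> C \<Longrightarrow> inv g \<otimes> c \<otimes> g \<in> C"
  using C_conj[of "inv g" c] by simp

lemma R_refl: "(x,x) \<in> R" unfolding fact_equiv_def by simp

lemma R_trans: "(x,y) \<in> R \<Longrightarrow> (y,z) \<in> R \<Longrightarrow> (x,z) \<in> R"
  unfolding fact_equiv_def by (rule rtrancl_trans)

lemma R_sym: "(x,y) \<in> R \<Longrightarrow> (y,x) \<in> R"
  unfolding fact_equiv_def
proof (induction rule: rtrancl_induct)
  case base then show ?case by simp
next
  case (step y z)
  then have "(z,y) \<in> fact_step G C \<union> (fact_step G C)\<inverse>" by auto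
  then show ?case using step.IH by (rule converse_rtrancl_into_rtrancl)
qed

lemma step_ctx: "(x,y) \<in> fact_step G C \<Longrightarrow> (p@x@q, p@y@q) \<in> fact_step G C"
  unfolding fact_step_def
proof (elim UnE CollectE exE conjE)
  fix u v g1 g2
  assume "(x, y) = (u @ [g1, g2] @ v, u @ [g2, inv g2 \<otimes> g1 \<otimes> g2] @ v)" "g1 \<in> C" "g2 \<in> C"
  then have "(p@x@q, p@y@q) = ((p@u) @ [g1, g2] @ (v@q), (p@u) @ [g2, inv g2 \<otimes> g1 \<otimes> g2] @ (v@q))" by auto
  with \<open>g1 \<in> C\<close> \<open>g2 \<in> C\<close> show "(p @ x @ q, p @ y @ q)
       \<in> {(u @ [g1, g2] @ v, u @ [g2, inv g2 \<otimes> g1 \<otimes> g2] @ v) |u v g1 g2. g1 \<in> C \<and> g2 \<in> C} \<union>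
          {(u @ [g1, g2] @ v, u @ [g1 \<otimes> g2 \<otimes> inv g1, g1] @ v) |u v g1 g2. g1 \<in> C \<and> g2 \<in> C}" by blast
next
  fix u v g1 g2
  assume "(x, y) = (u @ [g1, g2] @ v, u @ [g1 \<otimes> g2 \<otimes> inv g1, g1] @ v)" "g1 \<in> C" "g2 \<in> C"
  then have "(p@x@q, p@y@q) = ((p@u) @ [g1, g2] @ (v@q), (p@u) @ [g1 \<otimes> g2 \<otimes> inv g1, g1] @ (v@q))" by auto
  with \<open>g1 \<in> C\<close> \<open>g2 \<in> C\<close> show "(p @ x @ q, p @ y @ q)
       \<in> {(u @ [g1, g2] @ v, u @ [g2, inv g2 \<otimes> g1 \<otimes> g2] @ v) |u v g1 g2. g1 \<in> C \<and> g2 \<in> C} \<union>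
          {(u @ [g1, g2] @ v, u @ [g1 \<otimes> g2 \<otimes> inv g1, g1] @ v) |u v g1 g2. g1 \<in> C \<and> g2 \<in> C}" by blast
qed

lemma R_ctx: "(x,y) \<in> R \<Longrightarrow> (p@x@q, p@y@q) \<in> R"
  unfolding fact_equiv_def
proof (induction rule: rtrancl_induct)
  case base then show ?case by simp
next
  case (step y z)
  then have "(p@y@q, p@z@q) \<in> fact_step G C \<union> (fact_step G C)\<inverse>"
    using step_ctx by auto
  with step.IH show ?case by (rule rtrancl_into_rtrancl)
qed

lemma mv1: "b \<in> C \<Longrightarrow> c \<in> C \<Longrightarrow> ([c,b], [b, inv b \<otimes> c \<otimes> b]) \<in> R"
proof -
  assume "b \<in> C" "c \<in> C"
  then have "([] @ [c,b] @ [], [] @ [b, inv b \<otimes> c \<otimes> b] @ []) \<in> fact_step G C"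
    unfolding fact_step_def by blast
  then show ?thesis unfolding fact_equiv_def by auto
qed

lemma mv2: "g \<in> C \<Longrightarrow> c \<in> C \<Longrightarrow> ([g,c], [g \<otimes> c \<otimes> inv g, g]) \<in> R"
proof -
  assume "g \<in> C" "c \<in> C"
  then have "([] @ [g,c] @ [], [] @ [g \<otimes> c \<otimes> inv g, g] @ []) \<in> fact_step G C"
    unfolding fact_step_def by blast
  then show ?thesis unfolding fact_equiv_def by auto
qed

lemma R_ctxL: "(x,y) \<in> R \<Longrightarrow> (p@x, p@y) \<in> R"
  using R_ctx[of x y p "[]"] by simp
lemma R_ctxR: "(x,y) \<in> R \<Longrightarrow> (x@q, y@q) \<in> R"
  using R_ctx[of x y "[]" q] by simp


lemma gen_eq:
  assumes "A \<subseteq> carrier G" "XX \<subseteq> carrier G" "YY \<subseteq> carrier G"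
    "YY \<subseteq> generate G (A \<union> XX)" "XX \<subseteq> generate G (A \<union> YY)"
  shows "generate G (A \<union> XX) = generate G (A \<union> YY)"
proof
  have "A \<union> YY \<subseteq> generate G (A \<union> XX)" using assms(4) generate.incl[of _ "A \<union> XX" G] by auto
  then show "generate G (A \<union> YY) \<subseteq> generate G (A \<union> XX)"
    using generate_subgroup_incl generate_is_subgroup assms by (metis le_sup_iff)
next
  have "A \<union> XX \<subseteq> generate G (A \<union> YY)" using assms(5) generate.incl[of _ "A \<union> YY" G] by auto
  then show "generate G (A \<union> XX) \<subseteq> generate G (A \<union> YY)"
    using generate_subgroup_incl generate_is_subgroup assms by (metis le_sup_iff)
qed

definition invP :: "'a list \<Rightarrow> 'a list \<Rightarrow> bool" where
  "invP x y \<longleftrightarrow> length x = length y \<and> (set x \<subseteq> C \<longleftrightarrow> set y \<subseteq> C) \<and>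
     (set x \<subseteq> C \<longrightarrow> word_prod G x = word_prod G y \<and> generate G (set x) = generate G (set y))"

lemma invP_sym: "invP x y \<Longrightarrow> invP y x" unfolding invP_def by auto
lemma invP_trans: "invP x y \<Longrightarrow> invP y z \<Longrightarrow> invP x z" unfolding invP_def by auto

lemma invP_gen:
  assumes "g1 \<in> C" "g2 \<in> C" "g1' \<in> C" "g2' \<in> C"
    and p: "g1 \<otimes> g2 = g1' \<otimes> g2'"
    and m1: "\<And>A. A \<subseteq> carrier G \<Longrightarrow> g1' \<in> generate G (A \<union> {g1, g2}) \<and> g2' \<in> generate G (A \<union> {g1, g2})"
    and m2: "\<And>A. A \<subseteq> carrier G \<Longrightarrow> g1 \<in> generate G (A \<union> {g1', g2'}) \<and> g2 \<in> generate G (A \<union> {g1', g2'})"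
  shows "invP (uu @ [g1, g2] @ vv) (uu @ [g1', g2'] @ vv)"
  unfolding invP_def
proof (intro conjI impI)
  show "length (uu @ [g1, g2] @ vv) = length (uu @ [g1', g2'] @ vv)" by simp
  show "(set (uu @ [g1, g2] @ vv) \<subseteq> C) = (set (uu @ [g1', g2'] @ vv) \<subseteq> C)" using assms by auto
  assume s: "set (uu @ [g1, g2] @ vv) \<subseteq> C"
  then have cu: "set uu \<subseteq> carrier G" "set vv \<subseteq> carrier G" using C_sub by auto
  have w: "word_prod G [g1,g2] = word_prod G [g1',g2']" using p assms by simp
  have W: "word_prod G vv \<in> carrier G" using cu word_prod_closed by auto
  have "g1 \<otimes> (g2 \<otimes> word_prod G vv) = g1' \<otimes> (g2' \<otimes> word_prod G vv)"
    using p W assms by (simp add: m_assoc[symmetric])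
  then show "word_prod G (uu @ [g1, g2] @ vv) = word_prod G (uu @ [g1', g2'] @ vv)"
    using cu assms by (simp add: word_prod_append)
  have A: "set uu \<union> set vv \<subseteq> carrier G" using cu by auto
  have "generate G ((set uu \<union> set vv) \<union> {g1,g2}) = generate G ((set uu \<union> set vv) \<union> {g1',g2'})"
    by (rule gen_eq) (use A assms m1[OF A] m2[OF A] in auto)
  moreover have "set (uu @ [g1, g2] @ vv) = (set uu \<union> set vv) \<union> {g1,g2}" by auto
  moreover have "set (uu @ [g1', g2'] @ vv) = (set uu \<union> set vv) \<union> {g1',g2'}" by auto
  ultimately show "generate G (set (uu @ [g1, g2] @ vv)) = generate G (set (uu @ [g1', g2'] @ vv))" by simp
qed

lemma gincl: "x \<in> B \<Longrightarrow> x \<in> generate G (A \<union> B)" by (auto intro: generate.incl)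
lemma ginv: "x \<in> B \<Longrightarrow> inv x \<in> generate G (A \<union> B)" by (auto intro: generate.inv)

lemma invP_step: "(x,y) \<in> fact_step G C \<Longrightarrow> invP x y"
  unfolding fact_step_def
proof (elim UnE CollectE exE conjE)
  fix uu vv g1 g2
  assume e: "(x, y) = (uu @ [g1, g2] @ vv, uu @ [g2, inv g2 \<otimes> g1 \<otimes> g2] @ vv)" and g: "g1 \<in> C" "g2 \<in> C"
  have "invP (uu @ [g1, g2] @ vv) (uu @ [g2, inv g2 \<otimes> g1 \<otimes> g2] @ vv)"
  proof (rule invP_gen)
    show "g1 \<in> C" "g2 \<in> C" "g2 \<in> C" "inv g2 \<otimes> g1 \<otimes> g2 \<in> C" using g C_conj' by auto
    show "g1 \<otimes> g2 = g2 \<otimes> (inv g2 \<otimes> g1 \<otimes> g2)" using g by (simp add: m_assoc) (simp add: m_assoc[symmetric])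
    fix A assume A: "A \<subseteq> carrier G"
    show "g2 \<in> generate G (A \<union> {g1, g2}) \<and> inv g2 \<otimes> g1 \<otimes> g2 \<in> generate G (A \<union> {g1, g2})"
      by (intro conjI generate.eng ginv gincl) auto
    have "g1 = g2 \<otimes> (inv g2 \<otimes> g1 \<otimes> g2) \<otimes> inv g2" using g conj_back2 by simp
    moreover have "g2 \<otimes> (inv g2 \<otimes> g1 \<otimes> g2) \<otimes> inv g2 \<in> generate G (A \<union> {g2, inv g2 \<otimes> g1 \<otimes> g2})"
      by (intro conjI generate.eng ginv gincl) auto
    ultimately show "g1 \<in> generate G (A \<union> {g2, inv g2 \<otimes> g1 \<otimes> g2}) \<and> g2 \<in> generate G (A \<union> {g2, inv g2 \<otimes> g1 \<otimes> g2})"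
      by (metis generate.incl insertI1 insertI2 Un_iff)
  qed
  with e show "invP x y" by simp
next
  fix uu vv g1 g2
  assume e: "(x, y) = (uu @ [g1, g2] @ vv, uu @ [g1 \<otimes> g2 \<otimes> inv g1, g1] @ vv)" and g: "g1 \<in> C" "g2 \<in> C"
  have "invP (uu @ [g1, g2] @ vv) (uu @ [g1 \<otimes> g2 \<otimes> inv g1, g1] @ vv)"
  proof (rule invP_gen)
    show "g1 \<in> C" "g2 \<in> C" "g1 \<in> C" "g1 \<otimes> g2 \<otimes> inv g1 \<in> C" using g C_conj by auto
    show "g1 \<otimes> g2 = (g1 \<otimes> g2 \<otimes> inv g1) \<otimes> g1" using g by (simp add: m_assoc)
    fix A assume A: "A \<subseteq> carrier G"
    show "g1 \<otimes> g2 \<otimes> inv g1 \<in> generate G (A \<union> {g1, g2}) \<and> g1 \<in> generate G (A \<union> {g1, g2})"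
      by (intro conjI generate.eng ginv gincl) auto
    have "g2 = inv g1 \<otimes> (g1 \<otimes> g2 \<otimes> inv g1) \<otimes> g1" using g conj_back by simp
    moreover have "inv g1 \<otimes> (g1 \<otimes> g2 \<otimes> inv g1) \<otimes> g1 \<in> generate G (A \<union> {g1 \<otimes> g2 \<otimes> inv g1, g1})"
      by (intro conjI generate.eng ginv gincl) auto
    ultimately show "g1 \<in> generate G (A \<union> {g1 \<otimes> g2 \<otimes> inv g1, g1}) \<and> g2 \<in> generate G (A \<union> {g1 \<otimes> g2 \<otimes> inv g1, g1})"
      by (metis generate.incl insertI1 insertI2 Un_iff)
  qed
  with e show "invP x y" by simp
qed

lemma R_invP: "(x,y) \<in> R \<Longrightarrow> invP x y"
  unfolding fact_equiv_def
proof (induction rule: rtrancl_induct)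
  case base then show ?case by (simp add: invP_def)
next
  case (step y z)
  then have "invP y z" using invP_step invP_sym by auto
  with step.IH show ?case by (rule invP_trans)
qed


lemma pull_left: "set u \<subseteq> C \<Longrightarrow> b \<in> C \<Longrightarrow>
  \<exists>u'. (u @ [b], b # u') \<in> R \<and> set u' \<subseteq> C \<and> length u' = length u"
proof (induction u)
  case Nil then show ?case using R_refl by auto
next
  case (Cons c u)
  then obtain u' where u': "(u @ [b], b # u') \<in> R" "set u' \<subseteq> C" "length u' = length u" by auto
  have 1: "(c # u @ [b], c # b # u') \<in> R" using R_ctxL[OF u'(1), of "[c]"] by simp
  have "([c,b] @ u', [b, inv b \<otimes> c \<otimes> b] @ u') \<in> R" using mv1[of b c] Cons.prems R_ctxR by (metis list.set_intros(1) subsetD)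
  then have "((c # u) @ [b], b # (inv b \<otimes> c \<otimes> b) # u') \<in> R" using 1 R_trans by auto
  moreover have "set ((inv b \<otimes> c \<otimes> b) # u') \<subseteq> C" using C_conj' Cons.prems u' by auto
  ultimately show ?case using u' by (intro exI[of _ "(inv b \<otimes> c \<otimes> b) # u'"]) auto
qed

lemma gather: "set w \<subseteq> C \<Longrightarrow> b \<in> C \<Longrightarrow>
  \<exists>w'. (w, replicate (count_list w b) b @ w') \<in> R \<and> set w' \<subseteq> C"
proof (induction w rule: rev_induct)
  case Nil then show ?case using R_refl by (intro exI[of _ "[]"]) auto
next
  case (snoc x w)
  then obtain w' where w': "(w, replicate (count_list w b) b @ w') \<in> R" "set w' \<subseteq> C" by auto
  have 1: "(w @ [x], replicate (count_list w b) b @ w' @ [x]) \<in> R" using R_ctxR[OF w'(1)] by simp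
  show ?case
  proof (cases "x = b")
    case True
    obtain w'' where w'': "(w' @ [b], b # w'') \<in> R" "set w'' \<subseteq> C"
      using pull_left[OF w'(2) snoc.prems(2)] by auto
    have "(replicate (count_list w b) b @ w' @ [x], replicate (count_list w b) b @ b # w'') \<in> R"
      using R_ctxL[OF w''(1)] True by simp
    moreover have "replicate (count_list w b) b @ b # w'' = replicate (count_list (w@[x]) b) b @ w''"
      using True by (simp add: replicate_append_same[symmetric])
    ultimately show ?thesis using 1 R_trans w'' by metis
  next
    case False
    then show ?thesis using 1 w' snoc.prems by (intro exI[of _ "w' @ [x]"]) auto
  qed
qed

abbreviation "dd \<equiv> Coset.order G"

lemma d_pos: "dd > 0"
  unfolding Coset.order_def using fin one_closed by (auto simp add: card_gt_0_iff)

lemma pow_d: "x \<in> carrier G \<Longrightarrow> x [^] dd = \<one>"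
  by (rule pow_order_eq_1)


lemma rep_conj: "g \<in> C \<Longrightarrow> c \<in> C \<Longrightarrow>
  (c # replicate n g, replicate n (c \<otimes> g \<otimes> inv c) @ [c]) \<in> R"
proof (induction n)
  case 0 then show ?case using R_refl by simp
next
  case (Suc n)
  have 1: "(c # g # replicate n g, (c \<otimes> g \<otimes> inv c) # c # replicate n g) \<in> R"
    using R_ctxR[OF mv2[OF Suc.prems(2,1)], of "replicate n g"] by simp
  have 2: "((c \<otimes> g \<otimes> inv c) # c # replicate n g, (c \<otimes> g \<otimes> inv c) # replicate n (c \<otimes> g \<otimes> inv c) @ [c]) \<in> R"
    using R_ctxL[OF Suc.IH[OF Suc.prems], of "[c \<otimes> g \<otimes> inv c]"] by simp
  show ?case using R_trans[OF 1 2] by simp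
qed

lemma rep_pass: "g \<in> C \<Longrightarrow> c \<in> C \<Longrightarrow>
  (replicate n g @ [c], (g [^] n \<otimes> c \<otimes> inv (g [^] n)) # replicate n g) \<in> R"
proof (induction n)
  case 0 then show ?case using R_refl by simp
next
  case (Suc n)
  let ?cn = "g [^] n \<otimes> c \<otimes> inv (g [^] n)"
  have cn: "?cn \<in> C" using C_conj Suc.prems by simp
  have 1: "(g # (replicate n g @ [c]), g # ?cn # replicate n g) \<in> R"
    using R_ctxL[OF Suc.IH[OF Suc.prems], of "[g]"] by simp
  have 2: "(g # ?cn # replicate n g, (g \<otimes> ?cn \<otimes> inv g) # g # replicate n g) \<in> R"
    using R_ctxR[OF mv2[OF Suc.prems(1) cn], of "replicate n g"] by simp
  have e: "g \<otimes> ?cn \<otimes> inv g = g [^] Suc n \<otimes> c \<otimes> inv (g [^] Suc n)"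
    unfolding nat_pow_Suc2[OF C_in[OF Suc.prems(1)]] by (rule conj_comp) (use Suc.prems in auto)
  show ?case using R_trans[OF 1 2] e by simp
qed

lemma central: "g \<in> C \<Longrightarrow> c \<in> C \<Longrightarrow> (replicate dd g @ [c], c # replicate dd g) \<in> R"
  using rep_pass[of g c dd] pow_d[of g] by simp

lemma swap: "g \<in> C \<Longrightarrow> c \<in> C \<Longrightarrow>
  (replicate dd (c \<otimes> g \<otimes> inv c) @ c # s, replicate dd g @ c # s) \<in> R"
proof -
  assume g: "g \<in> C" and c: "c \<in> C"
  have 1: "(c # replicate dd g @ s, replicate dd (c \<otimes> g \<otimes> inv c) @ c # s) \<in> R"
    using R_ctxR[OF rep_conj[OF g c, of dd], of s] by simp
  have 2: "(replicate dd g @ c # s, c # replicate dd g @ s) \<in> R"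
    using R_ctxR[OF central[OF g c], of s] by simp
  show ?thesis using R_trans[OF R_sym[OF 1] R_sym[OF 2]] .
qed

lemma front: "set u \<subseteq> C \<Longrightarrow> c \<in> C \<Longrightarrow>
  (u @ [c], (word_prod G u \<otimes> c \<otimes> inv (word_prod G u)) # u) \<in> R \<and>
   word_prod G u \<otimes> c \<otimes> inv (word_prod G u) \<in> C"
proof (induction u)
  case Nil then show ?case using R_refl by simp
next
  case (Cons x u)
  let ?c = "word_prod G u \<otimes> c \<otimes> inv (word_prod G u)"
  have x: "x \<in> C" and u: "set u \<subseteq> C" using Cons.prems by auto
  have IH: "(u @ [c], ?c # u) \<in> R" "?c \<in> C" using Cons.IH u Cons.prems by auto
  have 1: "(x # (u @ [c]), x # ?c # u) \<in> R" using R_ctxL[OF IH(1), of "[x]"] by simp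
  have 2: "(x # ?c # u, (x \<otimes> ?c \<otimes> inv x) # x # u) \<in> R"
    using R_ctxR[OF mv2[OF x IH(2)], of u] by simp
  have wc: "word_prod G u \<in> carrier G" using u C_sub word_prod_closed by auto
  have e: "x \<otimes> ?c \<otimes> inv x = word_prod G (x # u) \<otimes> c \<otimes> inv (word_prod G (x # u))"
    using x wc Cons.prems by (simp add: conj_comp)
  show ?case using R_trans[OF 1 2] e C_conj[OF _ IH(2), of x] x by auto
qed


lemma kulikov:
  assumes s: "set s \<subseteq> C" and gen: "generate G (set s) = carrier G" and a: "a \<in> C"
    and h: "h \<in> carrier G"
  shows "(replicate dd (h \<otimes> a \<otimes> inv h) @ s, replicate dd a @ s) \<in> R"
proof -
  define H where "H = {h \<in> carrier G. (replicate dd (h \<otimes> a \<otimes> inv h) @ s, replicate dd a @ s) \<in> R}"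
  define M where "M = {x \<in> carrier G. \<forall>h\<in>H. x \<otimes> h \<in> H}"
  have Hc: "H \<subseteq> carrier G" unfolding H_def by auto
  have one_H: "\<one> \<in> H" unfolding H_def using R_refl a by simp
  have M1: "\<one> \<in> M" unfolding M_def using Hc by auto
  have Mm: "x \<otimes> y \<in> M" if "x \<in> M" "y \<in> M" for x y
    using that Hc unfolding M_def by (auto simp: m_assoc subset_iff)
  have Mpow: "x [^] (n::nat) \<in> M" if "x \<in> M" for x n
    using that by (induction n) (auto simp: M1 Mm)
  have Minv: "inv x \<in> M" if x: "x \<in> M" for x
  proof -
    have xc: "x \<in> carrier G" using x unfolding M_def by auto
    have "x [^] (dd - 1) \<otimes> x = x [^] Suc (dd - 1)" by simp
    also have "Suc (dd - 1) = dd" using d_pos by simp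
    finally have "x [^] (dd - 1) \<otimes> x = \<one>" using pow_d[OF xc] by simp
    then have "inv x = x [^] (dd - 1)" using xc by (simp add: inv_equality)
    then show ?thesis using Mpow[OF x] by simp
  qed
  have wpM: "set u \<subseteq> M \<Longrightarrow> word_prod G u \<in> M" for u
    by (induction u) (auto simp: M1 Mm)
  have key: "word_prod G u \<otimes> c \<otimes> inv (word_prod G u) \<in> M" if su: "s = u @ c # v" for u c v
  proof -
    let ?t = "word_prod G u \<otimes> c \<otimes> inv (word_prod G u)"
    have uc: "set u \<subseteq> C" "c \<in> C" using s su by auto
    from front[OF uc] have fr: "(u @ [c], ?t # u) \<in> R" and tC: "?t \<in> C" by auto
    have st: "(s, ?t # (u @ v)) \<in> R" using R_ctxR[OF fr, of v] su by simp
    have tc: "?t \<in> carrier G" using tC by simp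
    show ?thesis unfolding M_def
    proof (intro CollectI conjI ballI tc)
      fix hh assume hh: "hh \<in> H"
      then have hhc: "hh \<in> carrier G" using Hc by auto
      let ?ah = "hh \<otimes> a \<otimes> inv hh"
      have ah: "?ah \<in> C" using C_conj hhc a by simp
      have e: "(?t \<otimes> hh) \<otimes> a \<otimes> inv (?t \<otimes> hh) = ?t \<otimes> ?ah \<otimes> inv ?t"
        using conj_comp[of ?t hh a] tc hhc a by simp
      have 1: "(replicate dd (?t \<otimes> ?ah \<otimes> inv ?t) @ s, replicate dd (?t \<otimes> ?ah \<otimes> inv ?t) @ ?t # (u @ v)) \<in> R"
        using R_ctxL[OF st] by simp
      have 2: "(replicate dd (?t \<otimes> ?ah \<otimes> inv ?t) @ ?t # (u @ v), replicate dd ?ah @ ?t # (u @ v)) \<in> R"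
        by (rule swap[OF ah tC])
      have 3: "(replicate dd ?ah @ ?t # (u @ v), replicate dd ?ah @ s) \<in> R"
        using R_ctxL[OF R_sym[OF st]] by simp
      have 4: "(replicate dd ?ah @ s, replicate dd a @ s) \<in> R" using hh unfolding H_def by simp
      have "(replicate dd ((?t \<otimes> hh) \<otimes> a \<otimes> inv (?t \<otimes> hh)) @ s, replicate dd a @ s) \<in> R"
        unfolding e using R_trans[OF R_trans[OF R_trans[OF 1 2] 3] 4] .
      then show "?t \<otimes> hh \<in> H" unfolding H_def using tc hhc by simp
    qed
  qed
  have pre: "\<forall>v. s = u @ v \<longrightarrow> set u \<subseteq> M" for u
  proof (induction u rule: rev_induct)
    case Nil then show ?case by simp
  next
    case (snoc c u)
    show ?case
    proof (intro allI impI)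
      fix v assume sv: "s = (u @ [c]) @ v"
      then have sv': "s = u @ c # v" by simp
      have uM: "set u \<subseteq> M" using snoc.IH sv' by auto
      have P: "word_prod G u \<in> M" using wpM[OF uM] .
      have t: "word_prod G u \<otimes> c \<otimes> inv (word_prod G u) \<in> M" using key[OF sv'] .
      have Pc: "word_prod G u \<in> carrier G" and cc: "c \<in> carrier G" using P s sv' unfolding M_def by auto
      have "c = inv (word_prod G u) \<otimes> (word_prod G u \<otimes> c \<otimes> inv (word_prod G u)) \<otimes> word_prod G u"
        using conj_back[OF Pc cc] by simp
      also have "\<dots> \<in> M" using Mm Minv P t by simp
      finally show "set (u @ [c]) \<subseteq> M" using uM by simp
    qed
  qed
  have sM: "set s \<subseteq> M" using pre[of s] by simp
  have "generate G (set s) \<subseteq> M"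
  proof
    fix x assume "x \<in> generate G (set s)"
    then show "x \<in> M"
      by (induction rule: generate.induct) (use M1 sM Minv Mm in auto)
  qed
  then have "h \<in> M" using gen h by auto
  then have "h \<otimes> \<one> \<in> H" using one_H unfolding M_def by auto
  then show ?thesis using h unfolding H_def by simp
qed


lemma R_equiv: "equiv UNIV R"
  by (rule equivI) (auto intro: refl_onI symI transI R_refl R_sym R_trans)

lemma finC: "finite C" using fin C_sub finite_subset by auto

lemma surj_step:
  assumes Ct: "\<And>a b. a \<in> C \<Longrightarrow> b \<in> C \<Longrightarrow> \<exists>h\<in>carrier G. b = h \<otimes> a \<otimes> inv h"
    and a: "a \<in> C" and k: "card C * dd \<le> k" and s: "s \<in> words_G_one G C (k + dd)"
  shows "\<exists>w \<in> words_G_one G C k. (s, replicate dd a @ w) \<in> R"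
proof -
  have sl: "length s = k + dd" and sC: "set s \<subseteq> C" and sp: "word_prod G s = \<one>"
    and sg: "generate G (set s) = carrier G" using s unfolding words_G_one_def by auto
  obtain b where b: "b \<in> C" "count_list s b \<ge> dd + 1"
  proof (rule ccontr)
    assume nt: "\<not> thesis"
    have "\<forall>b\<in>C. count_list s b \<le> dd"
    proof (rule ballI, rule ccontr)
      fix b assume "b \<in> C" "\<not> count_list s b \<le> dd"
      then have "b \<in> C" "dd + 1 \<le> count_list s b" by auto
      then show False using that nt by blast
    qed
    then have "sum (count_list s) C \<le> card C * dd" using sum_bounded_above[of C "count_list s" dd] by simp
    then have "length s \<le> card C * dd" using sum_count_set[OF sC finC] by simp
    then show False using sl k d_pos by simp
  qed
  define m where "m = count_list s b"
  obtain w' where g: "(s, replicate m b @ w') \<in> R" and w'C: "set w' \<subseteq> C"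
    using gather[OF sC b(1)] m_def by auto
  define w where "w = b # replicate (m - dd - 1) b @ w'"
  have "m = dd + Suc (m - dd - 1)" using b(2) m_def by simp
  then have eq: "replicate m b @ w' = replicate dd b @ w"
    unfolding w_def by (metis append.assoc replicate_Suc replicate_add append_Cons append_Nil)
  have iv: "invP s (replicate dd b @ w)" using R_invP g eq by simp
  have wC: "set w \<subseteq> C" using w'C b unfolding w_def by auto
  have wl: "length w = k" using iv sl unfolding invP_def by simp
  have bc: "b \<in> carrier G" using b by simp
  have wc: "set w \<subseteq> carrier G" using wC C_sub by auto
  have "\<one> = word_prod G (replicate dd b @ w)" using iv sC sp unfolding invP_def by simp
  also have "\<dots> = word_prod G (replicate dd b) \<otimes> word_prod G w"
    by (rule word_prod_append) (use bc wc in auto)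
  also have "\<dots> = word_prod G w"
    using bc wc by (simp add: word_prod_replicate pow_d word_prod_closed)
  finally have wp: "word_prod G w = \<one>" by simp
  have "set (replicate dd b @ w) = set w" using d_pos unfolding w_def by auto
  then have wg: "generate G (set w) = carrier G" using iv sC sg unfolding invP_def by simp
  have wA: "w \<in> words_G_one G C k" unfolding words_G_one_def using wl wC wp wg by simp
  obtain h where h: "h \<in> carrier G" "b = h \<otimes> a \<otimes> inv h" using Ct[OF a b(1)] by auto
  have "(replicate dd b @ w, replicate dd a @ w) \<in> R" using kulikov[OF wC wg a h(1)] h(2) by simp
  then have "(s, replicate dd a @ w) \<in> R" using R_trans g eq by metis
  then show ?thesis using wA by blast
qed

lemma finite_A: "finite (words_G_one G C k)"
proof -
  have "words_G_one G C k \<subseteq> {xs. set xs \<subseteq> C \<and> length xs = k}" unfolding words_G_one_def by auto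
  then show ?thesis using finite_lists_length_eq[OF finC] finite_subset by blast
qed

lemma quot_img: "A // R = (\<lambda>x. R `` {x}) ` A" unfolding quotient_def by auto

lemma card_le:
  assumes Ct: "\<And>a b. a \<in> C \<Longrightarrow> b \<in> C \<Longrightarrow> \<exists>h\<in>carrier G. b = h \<otimes> a \<otimes> inv h"
    and a: "a \<in> C" and k: "card C * dd \<le> k"
  shows "h_count G C (k + dd) \<le> h_count G C k"
proof -
  define F where "F Z = R `` ((\<lambda>w. replicate dd a @ w) ` Z)" for Z
  have Fc: "F (R `` {w}) = R `` {replicate dd a @ w}" for w
  proof
    show "F (R `` {w}) \<subseteq> R `` {replicate dd a @ w}"
    proof
      fix y assume "y \<in> F (R `` {w})"
      then obtain w1 where "(w, w1) \<in> R" "(replicate dd a @ w1, y) \<in> R" unfolding F_def by auto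
      then show "y \<in> R `` {replicate dd a @ w}" using R_ctxL R_trans by blast
    qed
    show "R `` {replicate dd a @ w} \<subseteq> F (R `` {w})"
      unfolding F_def using R_refl by auto
  qed
  have fq: "finite (words_G_one G C k // R)" using finite_A quot_img by simp
  have sub: "words_G_one G C (k + dd) // R \<subseteq> F ` (words_G_one G C k // R)"
  proof
    fix Z assume "Z \<in> words_G_one G C (k + dd) // R"
    then obtain s where s: "s \<in> words_G_one G C (k + dd)" "Z = R `` {s}" unfolding quot_img by auto
    obtain w where w: "w \<in> words_G_one G C k" "(s, replicate dd a @ w) \<in> R"
      using surj_step[OF Ct a k s(1)] by auto
    have "Z = R `` {replicate dd a @ w}" using s(2) equiv_class_eq[OF R_equiv w(2)] by simp
    also have "\<dots> = F (R `` {w})" using Fc by simp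
    finally show "Z \<in> F ` (words_G_one G C k // R)" using w(1) unfolding quot_img by auto
  qed
  have "card (words_G_one G C (k + dd) // R) \<le> card (F ` (words_G_one G C k // R))"
    using card_mono[OF finite_imageI[OF fq] sub] .
  also have "\<dots> \<le> card (words_G_one G C k // R)" using card_image_le[OF fq] .
  finally show ?thesis unfolding h_count_def .
qed

end

lemma antimono_stab:
  fixes g :: "nat \<Rightarrow> nat" assumes m: "\<And>j. g (Suc j) \<le> g j"
  shows "\<exists>J. \<forall>j\<ge>J. g j = g J"
proof -
  define v where "v = (LEAST v. \<exists>j. g j = v)"
  have "\<exists>j. g j = v" unfolding v_def by (rule LeastI_ex) blast
  then obtain J where J: "g J = v" by blast
  have le: "g j \<le> g J" if "J \<le> j" for j
    using that
  proof (induction j rule: dec_induct)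
    case base then show ?case by simp
  next
    case (step j) then show ?case using m[of j] by simp
  qed
  have ge: "v \<le> g j" for j unfolding v_def by (rule Least_le) blast
  have "g j = g J" if "j \<ge> J" for j using le[OF that] ge[of j] J by simp
  then show ?thesis by blast
qed

lemma eventually_periodic:
  fixes f :: "nat \<Rightarrow> nat" assumes d: "d > 0" and h: "\<And>k. k \<ge> N \<Longrightarrow> f (k + d) \<le> f k"
  shows "\<exists>M. \<forall>k\<ge>M. f (k + d) = f k"
proof -
  define S where "S k = sum f {k..<k+d}" for k
  have Sstep: "S (Suc k) + f k = S k + f (k + d)" for k
  proof -
    have A: "sum f {k..<Suc (k+d)} = f k + sum f {Suc k..<Suc (k+d)}"
      by (rule sum.atLeast_Suc_lessThan) simp
    have B: "sum f {k..<Suc (k+d)} = sum f {k..<k+d} + f (k + d)"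
      by (rule sum.atLeastLessThan_Suc) simp
    have "S (Suc k) = sum f {Suc k..<Suc (k+d)}" unfolding S_def by simp
    then show ?thesis using A B unfolding S_def by linarith
  qed
  define g where "g j = S (N + j)" for j
  have "g (Suc j) \<le> g j" for j
    using Sstep[of "N + j"] h[of "N + j"] unfolding g_def by simp
  then obtain J where J: "\<forall>j\<ge>J. g j = g J" using antimono_stab by blast
  have "f (k + d) = f k" if "k \<ge> N + J" for k
  proof -
    have "k - N \<ge> J" "Suc (k - N) \<ge> J" using that by auto
    then have "g (k - N) = g J" "g (Suc (k - N)) = g J" using J by blast+
    moreover have "N + (k - N) = k" "N + Suc (k - N) = Suc k" using that by auto
    ultimately have "S (Suc k) = S k" unfolding g_def by metis
    then show ?thesis using Sstep[of k] by simp
  qed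
  then show ?thesis by blast
qed

lemma rational_of_periodic:
  fixes h :: "nat \<Rightarrow> nat" assumes d: "d > 0" and M: "\<And>k. k \<ge> M \<Longrightarrow> h (k + d) = h k"
  shows "rational_fps (Abs_fps (\<lambda>k. of_nat (h k)) :: rat fps)"
proof -
  define F :: "rat fps" where "F = Abs_fps (\<lambda>k. of_nat (h k))"
  define q :: "rat poly" where "q = 1 - monom 1 d"
  have q0: "q \<noteq> 0"
  proof
    assume "q = 0"
    then have "coeff q 0 = 0" by simp
    then show False unfolding q_def using d by (simp add: coeff_monom)
  qed
  define P where "P = fps_of_poly q * F"
  have Pn: "fps_nth P n = of_nat (h n) - (if n < d then 0 else of_nat (h (n - d)))" for n
    unfolding P_def q_def F_def
    by (simp add: fps_of_poly_diff fps_of_poly_monom' algebra_simps fps_X_power_mult_nth)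
  have P0: "fps_nth P i = 0" if "i > M + d" for i
  proof -
    have "h (i - d + d) = h (i - d)" using M[of "i - d"] that by simp
    then show ?thesis using that Pn[of i] by simp
  qed
  define p where "p = Abs_poly (fps_nth P)"
  have cp: "coeff p = (fps_nth P)" unfolding p_def by (rule coeff_Abs_poly[of "M + d"]) (use P0 in auto)
  have "fps_of_poly p = P" by (rule fps_ext) (simp add: cp)
  then have "fps_of_poly q * F = fps_of_poly p" unfolding P_def by simp
  then show ?thesis unfolding rational_fps_def F_def using q0 by blast
qed


theorem proposition4p4:
  fixes G :: "('a, 'b) monoid_scheme" and C :: "'a set"
  assumes "group G" and "finite (carrier G)"
    and "\<exists>c \<in> carrier G. C = conj_class G c"
    and "C \<noteq> {\<one>\<^bsub>G\<^esub>}"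
    and "generate G C = carrier G"
  shows "rational_fps (Abs_fps (\<lambda>k. of_nat (h_count G C k)) :: rat fps)"
proof -
  interpret group G by (rule assms(1))
  obtain c where c: "c \<in> carrier G" "C = conj_class G c" using assms(3) by auto
  have mem: "x \<in> C \<longleftrightarrow> (\<exists>g\<in>carrier G. x = g \<otimes>\<^bsub>G\<^esub> c \<otimes>\<^bsub>G\<^esub> inv\<^bsub>G\<^esub> g)" for x
    unfolding c(2) conj_class_def by auto
  have Csub: "C \<subseteq> carrier G" using mem c(1) by auto
  have Cconj: "g \<otimes>\<^bsub>G\<^esub> x \<otimes>\<^bsub>G\<^esub> inv\<^bsub>G\<^esub> g \<in> C" if tg: "g \<in> carrier G" and tx: "x \<in> C" for g x
  proof -
    obtain g' where g': "g' \<in> carrier G" "x = g' \<otimes>\<^bsub>G\<^esub> c \<otimes>\<^bsub>G\<^esub> inv\<^bsub>G\<^esub> g'" using tx mem by auto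
    have "g \<otimes>\<^bsub>G\<^esub> x \<otimes>\<^bsub>G\<^esub> inv\<^bsub>G\<^esub> g = (g \<otimes>\<^bsub>G\<^esub> g') \<otimes>\<^bsub>G\<^esub> c \<otimes>\<^bsub>G\<^esub> inv\<^bsub>G\<^esub> (g \<otimes>\<^bsub>G\<^esub> g')"
      using g' tg c(1) conj_comp by simp
    then show ?thesis using mem g' tg by blast
  qed
  interpret fsetup G C
    by unfold_locales (use Csub Cconj assms(2) in auto)
  have Ct: "\<exists>h\<in>carrier G. b = h \<otimes>\<^bsub>G\<^esub> a \<otimes>\<^bsub>G\<^esub> inv\<^bsub>G\<^esub> h" if ta: "a \<in> C" and tb: "b \<in> C" for a b
  proof -
    obtain g1 where g1: "g1 \<in> carrier G" "a = g1 \<otimes>\<^bsub>G\<^esub> c \<otimes>\<^bsub>G\<^esub> inv\<^bsub>G\<^esub> g1" using ta mem by auto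
    obtain g2 where g2: "g2 \<in> carrier G" "b = g2 \<otimes>\<^bsub>G\<^esub> c \<otimes>\<^bsub>G\<^esub> inv\<^bsub>G\<^esub> g2" using tb mem by auto
    have e: "(g2 \<otimes>\<^bsub>G\<^esub> inv\<^bsub>G\<^esub> g1) \<otimes>\<^bsub>G\<^esub> g1 = g2" using g1 g2 by (simp add: m_assoc)
    have "(g2 \<otimes>\<^bsub>G\<^esub> inv\<^bsub>G\<^esub> g1) \<otimes>\<^bsub>G\<^esub> a \<otimes>\<^bsub>G\<^esub> inv\<^bsub>G\<^esub> (g2 \<otimes>\<^bsub>G\<^esub> inv\<^bsub>G\<^esub> g1) = ((g2 \<otimes>\<^bsub>G\<^esub> inv\<^bsub>G\<^esub> g1) \<otimes>\<^bsub>G\<^esub> g1) \<otimes>\<^bsub>G\<^esub> c \<otimes>\<^bsub>G\<^esub> inv\<^bsub>G\<^esub> ((g2 \<otimes>\<^bsub>G\<^esub> inv\<^bsub>G\<^esub> g1) \<otimes>\<^bsub>G\<^esub> g1)"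
      unfolding g1(2) by (rule conj_comp) (use g1 g2 c in auto)
    then have "b = (g2 \<otimes>\<^bsub>G\<^esub> inv\<^bsub>G\<^esub> g1) \<otimes>\<^bsub>G\<^esub> a \<otimes>\<^bsub>G\<^esub> inv\<^bsub>G\<^esub> (g2 \<otimes>\<^bsub>G\<^esub> inv\<^bsub>G\<^esub> g1)" using e g2 by simp
    then show ?thesis using g1 g2 by blast
  qed
  have cC: "c \<in> C" using mem[of c] c(1) by (metis one_closed l_one r_one inv_one)
  have "h_count G C (k + Coset.order G) \<le> h_count G C k" if "card C * Coset.order G \<le> k" for k
    using card_le[OF Ct cC that] by simp
  then obtain M where "\<forall>k\<ge>M. h_count G C (k + Coset.order G) = h_count G C k"
    using eventually_periodic[OF d_pos] by blast
  then show ?thesis using rational_of_periodic[OF d_pos] by blast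
qed

end
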